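(* There is an absolute constant $c>0$ such that the following holds. Let $G$ be a finite abelian group, let $B$ be a regular Bohr set of rank $d$, let $A \subset B$ have relative density at least $\alpha>0$, and let $B', B''$ be nonempty subsets of $B_{c\alpha/d}$. Then either (1) there is an $x \in B$ such that $1_A*\mu_{B'}(x) \geq \tfrac{3}{4}\alpha$ and $1_A*\mu_{B''}(x) \geq \tfrac{3}{4}\alpha$, or (2) $\|1_A*\mu_{B'}\|_\infty \geq \tfrac{9}{8}\alpha$ or $\|1_A*\mu_{B''}\|_\infty \geq \tfrac{9}{8}\alpha$.
   Context: $f*g(x)=\sum_{y} f(y)g(x-y)$; $1_X$ indicator, $\mu_X=1_X/|X|$; $\|F\|_\infty=\max|F|$. Bohr sets: $\mathrm{Bohr}(\Gamma,\rho)=\{x: |\gamma(x)-1|\le\rho\ \forall\gamma\in\Gamma\}$ for $\Gamma\subset\widehat G$, $(\Gamma,\rho)$ part of the data, rank $|\Gamma|$; $B_\tau=\mathrm{Bohr}(\Gamma,\tau\rho)$. $B$ of rank $d$ is regular if $1-12d|\tau|\le |B_{1+\tau}|/|B|\le 1+12d|\tau|$ for $|\tau|\le 1/(12d)$. *)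

theory Defs
  imports "HOL-Analysis.Analysis" "HOL-Algebra.Algebra"
begin

text \<open>Finite abelian groups are HOL-Algebra structures with carrier in nat (every finite
abelian group is isomorphic to one of these), so that the absolute constant can be
quantified uniformly over all groups.\<close>

definition character :: "nat monoid \<Rightarrow> (nat \<Rightarrow> complex) \<Rightarrow> bool" where
  "character G \<gamma> \<longleftrightarrow>
     (\<forall>x\<in>carrier G. \<forall>y\<in>carrier G. \<gamma> (x \<otimes>\<^bsub>G\<^esub> y) = \<gamma> x * \<gamma> y)
   \<and> (\<forall>x\<in>carrier G. cmod (\<gamma> x) = 1)
   \<and> (\<forall>x. x \<notin> carrier G \<longrightarrow> \<gamma> x = 0)"

definition bohr :: "nat monoid \<Rightarrow> (nat \<Rightarrow> complex) set \<Rightarrow> real \<Rightarrow> nat set" where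
  "bohr G \<Gamma> \<rho> = {x\<in>carrier G. \<forall>\<gamma>\<in>\<Gamma>. cmod (\<gamma> x - 1) \<le> \<rho>}"

text \<open>Regularity of the Bohr set B = Bohr(Gamma, rho) of rank d = card Gamma,
  with B_t = Bohr(Gamma, t * rho).\<close>
definition regular_bohr :: "nat monoid \<Rightarrow> (nat \<Rightarrow> complex) set \<Rightarrow> real \<Rightarrow> bool" where
  "regular_bohr G \<Gamma> \<rho> \<longleftrightarrow>
     (\<forall>\<tau>::real. \<bar>\<tau>\<bar> \<le> 1 / (12 * real (card \<Gamma>)) \<longrightarrow>
        (1 - 12 * real (card \<Gamma>) * \<bar>\<tau>\<bar>) * real (card (bohr G \<Gamma> \<rho>))
          \<le> real (card (bohr G \<Gamma> ((1 + \<tau>) * \<rho>)))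
      \<and> real (card (bohr G \<Gamma> ((1 + \<tau>) * \<rho>)))
          \<le> (1 + 12 * real (card \<Gamma>) * \<bar>\<tau>\<bar>) * real (card (bohr G \<Gamma> \<rho>)))"

definition conv :: "nat monoid \<Rightarrow> (nat \<Rightarrow> real) \<Rightarrow> (nat \<Rightarrow> real) \<Rightarrow> nat \<Rightarrow> real" where
  "conv G f g x = (\<Sum>y\<in>carrier G. f y * g (mult G x (m_inv G y)))"

definition mu :: "nat set \<Rightarrow> nat \<Rightarrow> real" where
  "mu S x = indicator S x / real (card S)"

definition supnorm :: "nat monoid \<Rightarrow> (nat \<Rightarrow> real) \<Rightarrow> real" where
  "supnorm G F = Max ((\<lambda>x. \<bar>F x\<bar>) ` carrier G)"

end

theory Submission
  imports Defs
begin

lemma bohr_mono: "s \<le> t \<Longrightarrow> bohr G \<Gamma> s \<subseteq> bohr G \<Gamma> t"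
  unfolding bohr_def by force

lemma bohr_sub_carrier: "bohr G \<Gamma> s \<subseteq> carrier G"
  unfolding bohr_def by auto

lemma bohr_mult:
  assumes grp: "comm_group G" and "\<forall>\<gamma>\<in>\<Gamma>. character G \<gamma>" "b \<in> bohr G \<Gamma> s" "y \<in> bohr G \<Gamma> t"
  shows "b \<otimes>\<^bsub>G\<^esub> y \<in> bohr G \<Gamma> (s + t)"
  unfolding bohr_def
proof (intro CollectI conjI ballI)
  have bc: "b \<in> carrier G" and yc: "y \<in> carrier G" using assms(3,4) by (auto simp: bohr_def)
  fix \<gamma> assume g: "\<gamma> \<in> \<Gamma>"
  have ch: "character G \<gamma>" using assms(2) g by auto
  have "\<gamma> (b \<otimes>\<^bsub>G\<^esub> y) - 1 = (\<gamma> b - 1) * \<gamma> y + (\<gamma> y - 1)"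
    using ch bc yc unfolding character_def by (simp add: algebra_simps)
  hence "cmod (\<gamma> (b \<otimes>\<^bsub>G\<^esub> y) - 1) \<le> cmod (\<gamma> b - 1) * cmod (\<gamma> y) + cmod (\<gamma> y - 1)"
    by (metis norm_mult norm_triangle_ineq)
  also have "cmod (\<gamma> y) = 1" using ch yc unfolding character_def by auto
  also have "cmod (\<gamma> b - 1) \<le> s" using assms(3) g by (auto simp: bohr_def)
  also have "cmod (\<gamma> y - 1) \<le> t" using assms(4) g by (auto simp: bohr_def)
  finally show "cmod (\<gamma> (b \<otimes>\<^bsub>G\<^esub> y) - 1) \<le> s + t" by simp
next
  interpret comm_group G by fact
  show "b \<otimes>\<^bsub>G\<^esub> y \<in> carrier G"
    using assms(3,4) by (auto simp: bohr_def)
qed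

lemma inner_count:
  fixes G :: "nat monoid" (structure)
  assumes grp: "comm_group G" and fin: "finite (carrier G)"
    and ch: "\<forall>\<gamma>\<in>\<Gamma>. character G \<gamma>"
    and B': "B' \<subseteq> bohr G \<Gamma> s" "B' \<noteq> {}"
    and y: "y \<in> bohr G \<Gamma> t" and st: "s + t \<le> r"
  shows "(\<Sum>x\<in>bohr G \<Gamma> r. mu B' (x \<otimes>\<^bsub>G\<^esub> inv\<^bsub>G\<^esub> y)) \<ge> 1"
proof -
  interpret comm_group G by fact
  have yc: "y \<in> carrier G" using y bohr_sub_carrier by blast
  have finB: "finite (bohr G \<Gamma> r)" by (rule finite_subset[OF bohr_sub_carrier fin])
  have finB': "finite B'" using finite_subset[OF _ fin] B'(1) bohr_sub_carrier by blast
  have B'c: "B' \<subseteq> carrier G" using B'(1) bohr_sub_carrier by blast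
  have img: "(\<lambda>b. b \<otimes> y) ` B' \<subseteq> bohr G \<Gamma> r"
  proof
    fix z assume "z \<in> (\<lambda>b. b \<otimes> y) ` B'"
    then obtain b where b: "b \<in> B'" "z = b \<otimes> y" by auto
    have "b \<in> bohr G \<Gamma> s" using b(1) B'(1) by blast
    hence "z \<in> bohr G \<Gamma> (s + t)" using bohr_mult[OF grp ch _ y] b(2) by blast
    thus "z \<in> bohr G \<Gamma> r" using bohr_mono[OF st] by blast
  qed
  have inj: "inj_on (\<lambda>b. b \<otimes> y) B'"
  proof (rule inj_onI)
    fix a b assume "a \<in> B'" "b \<in> B'" "a \<otimes> y = b \<otimes> y"
    thus "a = b" using B'c yc right_cancel by blast
  qed
  have "(\<Sum>x\<in>bohr G \<Gamma> r. mu B' (x \<otimes> inv y)) \<ge> (\<Sum>x\<in>(\<lambda>b. b \<otimes> y) ` B'. mu B' (x \<otimes> inv y))"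
    by (rule sum_mono2[OF finB img]) (simp add: mu_def)
  also have "(\<Sum>x\<in>(\<lambda>b. b \<otimes> y) ` B'. mu B' (x \<otimes> inv y)) = (\<Sum>b\<in>B'. mu B' (b \<otimes> y \<otimes> inv y))"
    by (rule sum.reindex[OF inj, unfolded comp_def])
  also have "\<dots> = (\<Sum>b\<in>B'. 1 / real (card B'))"
  proof (rule sum.cong[OF refl])
    fix b assume b: "b \<in> B'"
    hence bc: "b \<in> carrier G" using B'c by blast
    have "b \<otimes> y \<otimes> inv y = b" using bc yc by (simp add: m_assoc)
    thus "mu B' (b \<otimes> y \<otimes> inv y) = 1 / real (card B')" using b by (simp add: mu_def)
  qed
  also have "\<dots> = 1" using finB' B'(2) by simp
  finally show ?thesis .
qed

lemma sum_lower:
  fixes G :: "nat monoid" (structure)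
  assumes grp: "comm_group G" and fin: "finite (carrier G)"
    and ch: "\<forall>\<gamma>\<in>\<Gamma>. character G \<gamma>"
    and A: "A \<subseteq> carrier G"
    and B': "B' \<subseteq> bohr G \<Gamma> s" "B' \<noteq> {}" and st: "s + t \<le> r"
  shows "(\<Sum>x\<in>bohr G \<Gamma> r. conv G (indicator A) (mu B') x) \<ge> real (card (A \<inter> bohr G \<Gamma> t))"
proof -
  interpret comm_group G by fact
  have finB: "finite (bohr G \<Gamma> r)" by (rule finite_subset[OF bohr_sub_carrier fin])
  have finA: "finite A" by (rule finite_subset[OF A fin])
  have "(\<Sum>x\<in>bohr G \<Gamma> r. conv G (indicator A) (mu B') x)
      = (\<Sum>y\<in>carrier G. indicator A y * (\<Sum>x\<in>bohr G \<Gamma> r. mu B' (x \<otimes> inv y)))"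
    unfolding conv_def sum_distrib_left by (rule sum.swap)
  also have "\<dots> = (\<Sum>y\<in>A. (\<Sum>x\<in>bohr G \<Gamma> r. mu B' (x \<otimes> inv y)))"
  proof -
    have "(\<Sum>y\<in>carrier G. indicator A y * (\<Sum>x\<in>bohr G \<Gamma> r. mu B' (x \<otimes> inv y)))
       = (\<Sum>y\<in>carrier G. if y \<in> A then (\<Sum>x\<in>bohr G \<Gamma> r. mu B' (x \<otimes> inv y)) else 0)"
      by (rule sum.cong[OF refl]) (simp add: indicator_def)
    also have "\<dots> = (\<Sum>y\<in>carrier G \<inter> A. (\<Sum>x\<in>bohr G \<Gamma> r. mu B' (x \<otimes> inv y)))"
      by (rule sum.inter_restrict[OF fin, symmetric])
    also have "carrier G \<inter> A = A" using A by blast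
    finally show ?thesis .
  qed
  also have "\<dots> \<ge> (\<Sum>y\<in>A \<inter> bohr G \<Gamma> t. (\<Sum>x\<in>bohr G \<Gamma> r. mu B' (x \<otimes> inv y)))"
    by (rule sum_mono2[OF finA]) (auto intro!: sum_nonneg simp: mu_def)
  moreover have "(\<Sum>y\<in>A \<inter> bohr G \<Gamma> t. (\<Sum>x\<in>bohr G \<Gamma> r. mu B' (x \<otimes> inv y))) \<ge> (\<Sum>y\<in>A \<inter> bohr G \<Gamma> t. 1)"
    by (rule sum_mono) (use inner_count[OF grp fin ch B' _ st] in auto)
  ultimately show ?thesis by simp
qed

lemma one_in_bohr:
  fixes G :: "nat monoid" (structure)
  assumes grp: "comm_group G" and ch: "\<forall>\<gamma>\<in>\<Gamma>. character G \<gamma>" and "\<rho> \<ge> 0"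
  shows "\<one>\<^bsub>G\<^esub> \<in> bohr G \<Gamma> \<rho>"
proof -
  interpret comm_group G by fact
  have h1: "\<gamma> \<one> = 1" if g: "\<gamma> \<in> \<Gamma>" for \<gamma>
  proof -
    have c: "character G \<gamma>" using ch g by blast
    have e: "\<gamma> \<one> = \<gamma> \<one> * \<gamma> \<one>" using c unfolding character_def
      by (metis one_closed l_one)
    have "cmod (\<gamma> \<one>) = 1" using c unfolding character_def by simp
    hence "\<gamma> \<one> \<noteq> 0" by auto
    thus ?thesis using e by (metis mult_cancel_right1)
  qed
  have "\<forall>\<gamma>\<in>\<Gamma>. cmod (\<gamma> \<one> - 1) \<le> \<rho>"
  proof
    fix \<gamma> assume "\<gamma> \<in> \<Gamma>"
    hence "\<gamma> \<one> = 1" by (rule h1)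
    thus "cmod (\<gamma> \<one> - 1) \<le> \<rho>" using assms(3) by simp
  qed
  thus ?thesis unfolding bohr_def by simp
qed

lemma main_sum:
  fixes G :: "nat monoid" (structure)
  assumes grp: "comm_group G" and fin: "finite (carrier G)"
    and ch: "\<forall>\<gamma>\<in>\<Gamma>. character G \<gamma>" and d1: "card \<Gamma> \<ge> 1" and rho: "\<rho> > 0"
    and reg: "regular_bohr G \<Gamma> \<rho>"
    and A: "A \<subseteq> bohr G \<Gamma> \<rho>" and al: "\<alpha> > 0" "real (card A) \<ge> \<alpha> * real (card (bohr G \<Gamma> \<rho>))"
    and B': "B' \<noteq> {}" "B' \<subseteq> bohr G \<Gamma> ((1/200 * \<alpha> / real (card \<Gamma>)) * \<rho>)"
  shows "(\<Sum>x\<in>bohr G \<Gamma> \<rho>. conv G (indicator A) (mu B') x) \<ge> \<alpha> * real (card (bohr G \<Gamma> \<rho>)) * (1 - 12/200)"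
proof -
  define B where "B = bohr G \<Gamma> \<rho>"
  define d where "d = real (card \<Gamma>)"
  define dl where "dl = 1/200 * \<alpha> / d"
  define Xs where "Xs = bohr G \<Gamma> ((1 - dl) * \<rho>)"
  have finB: "finite B" unfolding B_def by (rule finite_subset[OF bohr_sub_carrier fin])
  have "\<one> \<in> B" unfolding B_def using one_in_bohr[OF grp ch] rho by simp
  hence cB: "card B \<ge> 1" using finB by (metis One_nat_def Suc_leI card_gt_0_iff empty_iff)
  have finA: "finite A" using finB A B_def finite_subset by blast
  have "card A \<le> card B" using A finB unfolding B_def by (simp add: card_mono)
  hence "real (card A) \<le> real (card B)" by simp
  moreover have "\<alpha> * card B \<le> card A" using al(2) B_def by simp
  ultimately have "\<alpha> * card B \<le> card B" by linarith
  hence a1: "\<alpha> \<le> 1" using cB by simp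
  have al2: "\<alpha> * card B \<le> card A" using al(2) B_def by simp
  have d1': "d \<ge> 1" using d1 d_def by simp
  have dpos: "dl \<ge> 0" using al d1' by (simp add: dl_def)
  have "dl \<le> 1/200 / d" unfolding dl_def using a1 d1' by (simp add: divide_right_mono)
  also have "\<dots> \<le> 1 / (12 * d)" using d1' by (simp add: field_simps)
  finally have dsm: "dl \<le> 1 / (12 * d)" .
  have "\<bar>- dl\<bar> \<le> 1 / (12 * d)" using dsm dpos by simp
  hence c0: "(1 - 12 * d * \<bar>-dl\<bar>) * real (card B) \<le> real (card Xs)"
    using reg unfolding regular_bohr_def B_def Xs_def d_def by (metis diff_conv_add_uminus)
  have eq: "12 * d * \<bar>-dl\<bar> = 12/200 * \<alpha>" using dpos d1' al(1) by (simp add: dl_def)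
  have cX: "(1 - 12/200 * \<alpha>) * real (card B) \<le> real (card Xs)" using c0 unfolding eq .
  have XB: "Xs \<subseteq> B" unfolding Xs_def B_def using dpos rho by (intro bohr_mono) (simp add: mult_le_cancel_right1)
  have "card A = card (A \<inter> Xs) + card (A - Xs)" using finA by (metis card_Int_Diff)
  moreover have "card (A - Xs) \<le> card (B - Xs)" using A finB B_def by (intro card_mono) auto
  moreover have "card (B - Xs) = card B - card Xs" using XB finB by (simp add: card_Diff_subset finite_subset)
  moreover have "card Xs \<le> card B" using XB finB by (simp add: card_mono)
  ultimately have "real (card (A \<inter> Xs)) \<ge> real (card A) - real (card B) + real (card Xs)" by linarith
  hence low: "real (card (A \<inter> Xs)) \<ge> \<alpha> * real (card B) * (1 - 12/200)"
  proof -
    have L: "\<And>(a::real) b x k y. (1 - 12/200 * a) * b \<le> x \<Longrightarrow> a * b \<le> k \<Longrightarrow> y \<ge> k - b + x \<Longrightarrow> a * b * (1 - 12/200) \<le> y"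
      by (simp add: algebra_simps)
    show ?thesis by (rule L[OF cX al2 \<open>real (card (A \<inter> Xs)) \<ge> real (card A) - real (card B) + real (card Xs)\<close>])
  qed
  have Ac: "A \<subseteq> carrier G" using A bohr_sub_carrier by blast
  have "(\<Sum>x\<in>B. conv G (indicator A) (mu B') x) \<ge> real (card (A \<inter> Xs))"
    unfolding B_def Xs_def
    by (rule sum_lower[OF grp fin ch Ac B'(2) B'(1)]) (simp add: dl_def d_def algebra_simps)
  thus ?thesis using low unfolding B_def by linarith
qed

theorem lemma12:
  shows "\<exists>c>0. \<forall>(G::nat monoid) \<Gamma> \<rho> A B' B'' \<alpha>.
     comm_group G \<and> finite (carrier G)
   \<and> (\<forall>\<gamma>\<in>\<Gamma>. character G \<gamma>) \<and> finite \<Gamma> \<and> card \<Gamma> \<ge> 1 \<and> \<rho> > 0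
   \<and> regular_bohr G \<Gamma> \<rho>
   \<and> A \<subseteq> bohr G \<Gamma> \<rho> \<and> \<alpha> > 0 \<and> real (card A) \<ge> \<alpha> * real (card (bohr G \<Gamma> \<rho>))
   \<and> B' \<noteq> {} \<and> B' \<subseteq> bohr G \<Gamma> ((c * \<alpha> / real (card \<Gamma>)) * \<rho>)
   \<and> B'' \<noteq> {} \<and> B'' \<subseteq> bohr G \<Gamma> ((c * \<alpha> / real (card \<Gamma>)) * \<rho>)
   \<longrightarrow> (\<exists>x\<in>bohr G \<Gamma> \<rho>. conv G (indicator A) (mu B') x \<ge> 3/4 * \<alpha>
                          \<and> conv G (indicator A) (mu B'') x \<ge> 3/4 * \<alpha>)
     \<or> supnorm G (conv G (indicator A) (mu B')) \<ge> 9/8 * \<alpha>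
     \<or> supnorm G (conv G (indicator A) (mu B'')) \<ge> 9/8 * \<alpha>"
proof (rule exI[of _ "1/200"], intro conjI allI impI)
  show "(0::real) < 1/200" by simp
next
  fix G :: "nat monoid" and \<Gamma> \<rho> A B' B'' and \<alpha> :: real
  assume H: "comm_group G \<and> finite (carrier G)
   \<and> (\<forall>\<gamma>\<in>\<Gamma>. character G \<gamma>) \<and> finite \<Gamma> \<and> card \<Gamma> \<ge> 1 \<and> \<rho> > 0
   \<and> regular_bohr G \<Gamma> \<rho>
   \<and> A \<subseteq> bohr G \<Gamma> \<rho> \<and> \<alpha> > 0 \<and> real (card A) \<ge> \<alpha> * real (card (bohr G \<Gamma> \<rho>))
   \<and> B' \<noteq> {} \<and> B' \<subseteq> bohr G \<Gamma> ((1/200 * \<alpha> / real (card \<Gamma>)) * \<rho>)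
   \<and> B'' \<noteq> {} \<and> B'' \<subseteq> bohr G \<Gamma> ((1/200 * \<alpha> / real (card \<Gamma>)) * \<rho>)"
  define B where "B = bohr G \<Gamma> \<rho>"
  define f where "f = conv G (indicator A) (mu B')"
  define g where "g = conv G (indicator A) (mu B'')"
  have s1: "(\<Sum>x\<in>B. f x) \<ge> \<alpha> * real (card B) * (1 - 12/200)"
    unfolding B_def f_def using H by (intro main_sum) auto
  have s2: "(\<Sum>x\<in>B. g x) \<ge> \<alpha> * real (card B) * (1 - 12/200)"
    unfolding B_def g_def using H by (intro main_sum) auto
  have finC: "finite (carrier G)" using H by blast
  have finB: "finite B" unfolding B_def by (rule finite_subset[OF bohr_sub_carrier finC])
  have "\<one>\<^bsub>G\<^esub> \<in> B" unfolding B_def using one_in_bohr[of G \<Gamma> \<rho>] H by auto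
  hence Bne: "B \<noteq> {}" by blast
  have BC: "B \<subseteq> carrier G" unfolding B_def by (rule bohr_sub_carrier)
  have le_sup: "F x \<le> supnorm G F" if "x \<in> B" for F x
  proof -
    have "\<bar>F x\<bar> \<le> supnorm G F" unfolding supnorm_def
      using that BC finC by (intro Max_ge) auto
    thus ?thesis by simp
  qed
  show "(\<exists>x\<in>bohr G \<Gamma> \<rho>. conv G (indicator A) (mu B') x \<ge> 3/4 * \<alpha>
                          \<and> conv G (indicator A) (mu B'') x \<ge> 3/4 * \<alpha>)
     \<or> supnorm G (conv G (indicator A) (mu B')) \<ge> 9/8 * \<alpha>
     \<or> supnorm G (conv G (indicator A) (mu B'')) \<ge> 9/8 * \<alpha>"
  proof (rule ccontr)
    assume N: "\<not> ?thesis"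
    have pt: "f x + g x < 15/8 * \<alpha>" if x: "x \<in> B" for x
    proof -
      have "f x < 9/8 * \<alpha>" using le_sup[OF x, of f] N f_def by auto
      moreover have "g x < 9/8 * \<alpha>" using le_sup[OF x, of g] N g_def by auto
      moreover have "f x < 3/4 * \<alpha> \<or> g x < 3/4 * \<alpha>" using N x B_def f_def g_def by auto
      ultimately show ?thesis by linarith
    qed
    have "(\<Sum>x\<in>B. f x + g x) < (\<Sum>x\<in>B. 15/8 * \<alpha>)"
      by (rule sum_strict_mono[OF finB Bne pt])
    hence "(\<Sum>x\<in>B. f x) + (\<Sum>x\<in>B. g x) < 15/8 * \<alpha> * real (card B)"
      by (simp add: sum.distrib mult.commute)
    moreover have "\<alpha> * real (card B) \<ge> 0" using H by simp
    moreover have L: "\<And>(a::real) b u v. u + v < 15/8 * a * b \<Longrightarrow> 0 \<le> a * b \<Longrightarrow> a * b * (1 - 12/200) \<le> u \<Longrightarrow> a * b * (1 - 12/200) \<le> v \<Longrightarrow> False"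
      by (simp add: algebra_simps)
    ultimately show False using s1 s2 by blast
  qed
qed

end
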